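(* Let $d\in\mathbb{N}$, $a<b$, $\alpha\in[0,1]$, $\rho=\mathrm{diag}(\rho_1,\dots,\rho_d)\in\mathbb{R}^{d\times d}$, and let $L:\mathbb{R}^d\times\mathbb{R}^d\to\mathbb{R}$, $(z,\dot z)\mapsto L(z,\dot z)$, be a $C^2$ function that is even in its second variable, i.e. $L(z,-\dot z)=L(z,\dot z)$. Consider the equations $$\text{(a)}\quad \frac{d}{dt}\Big(\frac{\partial L}{\partial\dot x}(x,\dot x)\Big)-\frac{\partial L}{\partial x}(x,\dot x)+\rho\,D^\alpha_-D^\alpha_-x=0,$$ $$\text{(b)}\quad \frac{d}{dt}\Big(\frac{\partial L}{\partial\dot y}(y,\dot y)\Big)-\frac{\partial L}{\partial y}(y,\dot y)+\rho\,D^\alpha_+D^\alpha_+y=0,$$ for smooth curves $x,y:[a,b]\to\mathbb{R}^d$. If $x$ is a smooth curve and $y(t):=x(a+b-t)$ (so that $y(a)=x(b)$, $y(b)=x(a)$), then equation (b) for $y$ is equation (a) for $x$ in reversed time $\tilde t=a+b-t$: for every $t\in[a,b]$ the left-hand side of (b) evaluated along $y$ at time $t$ equals the left-hand side of (a) evaluated along $x$ at time $\tilde t=a+b-t$. In particular $y$ solves (b) on $[a,b]$ if and only if $x$ solves (a) on $[a,b]$.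
   Context: For $f:[a,b]\to\mathbb{R}$ (componentwise for vector-valued functions), $D^\alpha_-f(t)=\frac{1}{\Gamma(1-\alpha)}\frac{d}{dt}\int_a^t(t-\tau)^{-\alpha}f(\tau)\,d\tau$ and $D^\alpha_+f(t)=-\frac{1}{\Gamma(1-\alpha)}\frac{d}{dt}\int_t^b(\tau-t)^{-\alpha}f(\tau)\,d\tau$ (Riemann–Liouville fractional derivatives); $D^\alpha_\pm D^\alpha_\pm$ denotes the composition. These equations are the restricted fractional Euler–Lagrange equations for the Lagrangian $L(x,\dot x)+L(y,\dot y)-D^\alpha_-x\,\rho\,D^\alpha_+y$. *)

theory Defs
  imports "HOL-Analysis.Analysis"
begin

definition C2_fun :: "('a::euclidean_space \<Rightarrow> real) \<Rightarrow> bool" where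
  "C2_fun f \<longleftrightarrow> (\<exists>(f' :: 'a \<Rightarrow> ('a \<Rightarrow>\<^sub>L real)) (f'' :: 'a \<Rightarrow> ('a \<Rightarrow>\<^sub>L ('a \<Rightarrow>\<^sub>L real))).
      (\<forall>p. (f has_derivative blinfun_apply (f' p)) (at p)) \<and>
      (\<forall>p. (f' has_derivative blinfun_apply (f'' p)) (at p)) \<and>
      continuous_on UNIV f'')"

definition smooth_curve_on :: "real set \<Rightarrow> (real \<Rightarrow> 'a::real_normed_vector) \<Rightarrow> bool" where
  "smooth_curve_on S x \<longleftrightarrow> (\<exists>D. D 0 = x \<and>
      (\<forall>k. \<forall>t\<in>S. (D k has_vector_derivative D (Suc k) t) (at t within S)))"

definition ddt :: "real set \<Rightarrow> (real \<Rightarrow> 'a::real_normed_vector) \<Rightarrow> real \<Rightarrow> 'a" where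
  "ddt S f t = (if f differentiable (at t within S) then vector_derivative f (at t within S) else 0)"

definition partial_z :: "(real^'d \<Rightarrow> real^'d \<Rightarrow> real) \<Rightarrow> real^'d \<Rightarrow> real^'d \<Rightarrow> real^'d" where
  "partial_z L z v = (\<chi> i. deriv (\<lambda>s. L (z + s *\<^sub>R axis i 1) v) 0)"

definition partial_v :: "(real^'d \<Rightarrow> real^'d \<Rightarrow> real) \<Rightarrow> real^'d \<Rightarrow> real^'d \<Rightarrow> real^'d" where
  "partial_v L z v = (\<chi> i. deriv (\<lambda>s. L z (v + s *\<^sub>R axis i 1)) 0)"

definition RL_left :: "real \<Rightarrow> real \<Rightarrow> real \<Rightarrow> (real \<Rightarrow> real) \<Rightarrow> real \<Rightarrow> real" where
  "RL_left a b \<alpha> f t = 1 / Gamma (1 - \<alpha>) *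
     ddt {a..b} (\<lambda>s. integral {a..s} (\<lambda>\<tau>. (s - \<tau>) powr (-\<alpha>) * f \<tau>)) t"

definition RL_right :: "real \<Rightarrow> real \<Rightarrow> real \<Rightarrow> (real \<Rightarrow> real) \<Rightarrow> real \<Rightarrow> real" where
  "RL_right a b \<alpha> f t = - (1 / Gamma (1 - \<alpha>)) *
     ddt {a..b} (\<lambda>s. integral {s..b} (\<lambda>\<tau>. (\<tau> - s) powr (-\<alpha>) * f \<tau>)) t"

definition RLv_left :: "real \<Rightarrow> real \<Rightarrow> real \<Rightarrow> (real \<Rightarrow> real^'d) \<Rightarrow> real \<Rightarrow> real^'d" where
  "RLv_left a b \<alpha> x t = (\<chi> i. RL_left a b \<alpha> (\<lambda>s. x s $ i) t)"

definition RLv_right :: "real \<Rightarrow> real \<Rightarrow> real \<Rightarrow> (real \<Rightarrow> real^'d) \<Rightarrow> real \<Rightarrow> real^'d" where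
  "RLv_right a b \<alpha> x t = (\<chi> i. RL_right a b \<alpha> (\<lambda>s. x s $ i) t)"

definition EL_a :: "(real^'d \<Rightarrow> real^'d \<Rightarrow> real) \<Rightarrow> real^'d^'d \<Rightarrow> real \<Rightarrow> real \<Rightarrow> real
     \<Rightarrow> (real \<Rightarrow> real^'d) \<Rightarrow> real \<Rightarrow> real^'d" where
  "EL_a L \<rho> \<alpha> a b x t =
     ddt {a..b} (\<lambda>s. partial_v L (x s) (ddt {a..b} x s)) t
     - partial_z L (x t) (ddt {a..b} x t)
     + \<rho> *v RLv_left a b \<alpha> (RLv_left a b \<alpha> x) t"

definition EL_b :: "(real^'d \<Rightarrow> real^'d \<Rightarrow> real) \<Rightarrow> real^'d^'d \<Rightarrow> real \<Rightarrow> real \<Rightarrow> real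
     \<Rightarrow> (real \<Rightarrow> real^'d) \<Rightarrow> real \<Rightarrow> real^'d" where
  "EL_b L \<rho> \<alpha> a b y t =
     ddt {a..b} (\<lambda>s. partial_v L (y s) (ddt {a..b} y s)) t
     - partial_z L (y t) (ddt {a..b} y t)
     + \<rho> *v RLv_right a b \<alpha> (RLv_right a b \<alpha> y) t"

end

theory Submission
  imports Defs
begin

lemma ddt_cong:
  assumes "t \<in> S" "\<And>s. s \<in> S \<Longrightarrow> f s = g s"
  shows "ddt S f t = ddt S g t"
proof -
  have eq: "\<And>D. (f has_vector_derivative D) (at t within S) \<longleftrightarrow> (g has_vector_derivative D) (at t within S)"
    using has_vector_derivative_weaken[of _ _ t S S] assms by (metis order_refl)
  have "f differentiable (at t within S) \<longleftrightarrow> g differentiable (at t within S)"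
    using eq by (metis vector_derivative_works differentiableI_vector)
  moreover have "vector_derivative f (at t within S) = vector_derivative g (at t within S)"
    unfolding vector_derivative_def using eq by simp
  ultimately show ?thesis unfolding ddt_def by simp
qed

lemma ddt_reflect_aux:
  fixes f :: "real \<Rightarrow> 'a::euclidean_space"
  assumes "a < b" "t \<in> {a..b}" "f differentiable (at (a+b-t) within {a..b})"
  shows "((\<lambda>s. f (a+b-s)) has_vector_derivative - vector_derivative f (at (a+b-t) within {a..b})) (at t within {a..b})"
proof -
  have r: "((\<lambda>s. a+b-s) has_vector_derivative (-1)) (at t within {a..b})"
    by (auto intro!: derivative_eq_intros simp: has_real_derivative_iff_has_vector_derivative[symmetric])
  have img: "(\<lambda>s. a+b-s) ` {a..b} = {a..b}"
    by (auto simp: image_iff intro!: bexI[where x="a+b-_"]) 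
  have "(f has_vector_derivative vector_derivative f (at (a+b-t) within {a..b})) (at ((\<lambda>s. a+b-s) t) within (\<lambda>s. a+b-s) ` {a..b})"
    using assms(3) img by (simp add: vector_derivative_works[symmetric])
  from vector_diff_chain_within[OF r this] show ?thesis by (simp add: o_def)
qed

lemma ddt_reflect:
  fixes f :: "real \<Rightarrow> 'a::euclidean_space"
  assumes "a < b" "t \<in> {a..b}"
  shows "ddt {a..b} (\<lambda>s. f (a+b-s)) t = - ddt {a..b} f (a+b-t)"
proof (cases "f differentiable (at (a+b-t) within {a..b})")
  case True
  note h = ddt_reflect_aux[OF assms True]
  then have "(\<lambda>s. f (a+b-s)) differentiable (at t within {a..b})"
    using differentiableI_vector by blast
  then show ?thesis using True h vector_derivative_within_closed_interval[OF assms h]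
    unfolding ddt_def by simp
next
  case False
  have "\<not> (\<lambda>s. f (a+b-s)) differentiable (at t within {a..b})"
  proof
    assume d: "(\<lambda>s. f (a+b-s)) differentiable (at t within {a..b})"
    have t': "a+b-t \<in> {a..b}" using assms by auto
    from ddt_reflect_aux[OF assms(1) t', of "\<lambda>s. f (a+b-s)"] d
    have "(f has_vector_derivative (- vector_derivative (\<lambda>s. f (a+b-s)) (at t within {a..b}))) (at (a+b-t) within {a..b})" by simp
    then show False using False differentiableI_vector by blast
  qed
  then show ?thesis using False unfolding ddt_def by simp
qed

lemma ddt_minus:
  fixes f :: "real \<Rightarrow> 'a::euclidean_space"
  assumes "a < b" "t \<in> {a..b}"
  shows "ddt {a..b} (\<lambda>s. - f s) t = - ddt {a..b} f t"
proof (cases "f differentiable (at t within {a..b})")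
  case True
  then have h: "((\<lambda>s. - f s) has_vector_derivative - vector_derivative f (at t within {a..b})) (at t within {a..b})"
    by (intro has_vector_derivative_minus) (simp add: vector_derivative_works[symmetric])
  then show ?thesis using True vector_derivative_within_closed_interval[OF assms h] differentiableI_vector
    unfolding ddt_def by fastforce
next
  case False
  have "\<not> (\<lambda>s. - f s) differentiable (at t within {a..b})"
  proof
    assume "(\<lambda>s. - f s) differentiable (at t within {a..b})"
    then have "((\<lambda>s. - (- f s)) has_vector_derivative - vector_derivative (\<lambda>s. - f s) (at t within {a..b})) (at t within {a..b})"
      by (intro has_vector_derivative_minus) (simp add: vector_derivative_works[symmetric])
    then show False using False differentiableI_vector by fastforce
  qed
  then show ?thesis using False unfolding ddt_def by simp
qed

lemma integral_reflect_RL: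
  fixes g :: "real \<Rightarrow> real"
  shows "integral {s..b} (\<lambda>\<tau>. (\<tau> - s) powr (-\<alpha>) * g (a+b-\<tau>))
       = integral {a..a+b-s} (\<lambda>u. (a+b-s-u) powr (-\<alpha>) * g u)"
proof -
  define h where "h u = (a+b-s-u) powr (-\<alpha>) * g u" for u
  have "integral {s..b} (\<lambda>\<tau>. (\<tau> - s) powr (-\<alpha>) * g (a+b-\<tau>)) = integral {- (-s)..- (-b)} (\<lambda>\<tau>. (\<lambda>w. h (w + (a+b))) (-\<tau>))"
    by (simp add: h_def algebra_simps)
  also have "\<dots> = integral {-b..-s} (\<lambda>w. h (w + (a+b)))"
    using Henstock_Kurzweil_Integration.integral_reflect_real[of "-s" "-b" "\<lambda>w. h (w + (a+b))"] by simp
  also have "\<dots> = integral {a - (a+b)..(a+b-s) - (a+b)} (\<lambda>w. h (w + (a+b)))" by simp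
  also have "\<dots> = integral {a..a+b-s} h" by (rule integral_shift_real_ivl)
  finally show ?thesis by (simp add: h_def[abs_def])
qed

lemma RL_reflect:
  fixes g :: "real \<Rightarrow> real"
  assumes "a < b" "t \<in> {a..b}"
  shows "RL_right a b \<alpha> (\<lambda>s. g (a+b-s)) t = RL_left a b \<alpha> g (a+b-t)"
proof -
  define I where "I w = integral {a..w} (\<lambda>u. (w-u) powr (-\<alpha>) * g u)" for w
  have "ddt {a..b} (\<lambda>s. integral {s..b} (\<lambda>\<tau>. (\<tau> - s) powr (-\<alpha>) * g (a+b-\<tau>))) t
      = ddt {a..b} (\<lambda>s. I (a+b-s)) t"
    by (rule ddt_cong[OF assms(2)]) (simp add: I_def integral_reflect_RL)
  also have "\<dots> = - ddt {a..b} I (a+b-t)" by (rule ddt_reflect[OF assms])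
  finally show ?thesis unfolding RL_right_def RL_left_def I_def[abs_def] by simp
qed

lemma RL_right_cong:
  assumes "t \<in> {a..b}" "\<And>s. s \<in> {a..b} \<Longrightarrow> h s = h' s"
  shows "RL_right a b \<alpha> h t = RL_right a b \<alpha> h' t"
proof -
  have "ddt {a..b} (\<lambda>s. integral {s..b} (\<lambda>\<tau>. (\<tau> - s) powr (-\<alpha>) * h \<tau>)) t
      = ddt {a..b} (\<lambda>s. integral {s..b} (\<lambda>\<tau>. (\<tau> - s) powr (-\<alpha>) * h' \<tau>)) t"
    by (rule ddt_cong[OF assms(1)], rule integral_cong) (auto simp: assms(2))
  then show ?thesis unfolding RL_right_def by simp
qed

lemma L_deriv:
  fixes L :: "real^'d \<Rightarrow> real^'d \<Rightarrow> real"
  assumes "C2_fun (\<lambda>p. L (fst p) (snd p))"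
  shows "\<exists>D. ((\<lambda>s. L z (w + s *\<^sub>R e)) has_real_derivative D) (at s0)"
proof -
  obtain f' :: "((real^'d) \<times> (real^'d)) \<Rightarrow> (((real^'d) \<times> (real^'d)) \<Rightarrow>\<^sub>L real)"
    where f': "\<forall>p. ((\<lambda>p. L (fst p) (snd p)) has_derivative blinfun_apply (f' p)) (at p)"
    using assms unfolding C2_fun_def by blast
  have g: "((\<lambda>s. (z, w + s *\<^sub>R e)) has_derivative (\<lambda>s. (0, s *\<^sub>R e))) (at s0)"
    by (auto intro!: derivative_eq_intros)
  have c: "(((\<lambda>p. L (fst p) (snd p)) \<circ> (\<lambda>s. (z, w + s *\<^sub>R e))) has_derivative
      (blinfun_apply (f' (z, w + s0 *\<^sub>R e)) \<circ> (\<lambda>s. (0, s *\<^sub>R e)))) (at s0)"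
    by (rule diff_chain_at[OF g]) (use f' in blast)
  have e1: "((\<lambda>p. L (fst p) (snd p)) \<circ> (\<lambda>s. (z, w + s *\<^sub>R e))) = (\<lambda>s. L z (w + s *\<^sub>R e))"
    by (simp add: o_def)
  have e2: "(blinfun_apply (f' (z, w + s0 *\<^sub>R e)) \<circ> (\<lambda>s. (0, s *\<^sub>R e)))
      = (\<lambda>s. blinfun_apply (f' (z, w + s0 *\<^sub>R e)) (0, e) * s)"
  proof
    fix s :: real
    have "(0::real^'d, s *\<^sub>R e) = s *\<^sub>R (0, e)" by simp
    then show "(blinfun_apply (f' (z, w + s0 *\<^sub>R e)) \<circ> (\<lambda>s. (0, s *\<^sub>R e))) s
      = blinfun_apply (f' (z, w + s0 *\<^sub>R e)) (0, e) * s"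
      by (simp only: o_apply blinfun.scaleR_right) (simp add: mult.commute)
  qed
  show ?thesis using c unfolding e1 e2 has_field_derivative_def by blast
qed

lemma partial_z_even:
  assumes "\<forall>z v. L z (- v) = L z v"
  shows "partial_z L z (- v) = partial_z L z v"
  unfolding partial_z_def using assms by simp

lemma partial_v_odd:
  fixes L :: "real^'d \<Rightarrow> real^'d \<Rightarrow> real"
  assumes "C2_fun (\<lambda>p. L (fst p) (snd p))" "\<forall>z v. L z (- v) = L z v"
  shows "partial_v L z (- v) = - partial_v L z v"
proof -
  have "deriv (\<lambda>s. L z (- v + s *\<^sub>R axis i 1)) 0 = - deriv (\<lambda>s. L z (v + s *\<^sub>R axis i 1)) 0" for i
  proof -
    obtain D where D: "((\<lambda>s. L z (v + s *\<^sub>R axis i 1)) has_real_derivative D) (at (- 0))"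
      using L_deriv[OF assms(1)] by blast
    have m: "((\<lambda>s::real. - s) has_real_derivative -1) (at 0)"
      by (auto intro!: derivative_eq_intros)
    have "((\<lambda>s. L z (v + (- s) *\<^sub>R axis i 1)) has_real_derivative D * -1) (at 0)"
      using DERIV_chain2[OF D m] by simp
    moreover have "(\<lambda>s. L z (v + (- s) *\<^sub>R axis i 1)) = (\<lambda>s. L z (- v + s *\<^sub>R axis i 1))"
    proof
      fix s
      have "L z (- v + s *\<^sub>R axis i 1) = L z (- (- v + s *\<^sub>R axis i 1))" using assms(2) by metis
      then show "L z (v + (- s) *\<^sub>R axis i 1) = L z (- v + s *\<^sub>R axis i 1)" by (simp add: algebra_simps)
    qed
    ultimately have "deriv (\<lambda>s. L z (- v + s *\<^sub>R axis i 1)) 0 = - D"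
      using DERIV_imp_deriv by fastforce
    moreover have "deriv (\<lambda>s. L z (v + s *\<^sub>R axis i 1)) 0 = D" using D DERIV_imp_deriv by simp
    ultimately show ?thesis by simp
  qed
  then show ?thesis unfolding partial_v_def by (simp add: vec_eq_iff)
qed

theorem proposition3p8:
  fixes L :: "real^'d \<Rightarrow> real^'d \<Rightarrow> real" and \<rho> :: "real^'d^'d"
    and a b \<alpha> :: real and x :: "real \<Rightarrow> real^'d"
  assumes "a < b" and "0 \<le> \<alpha>" and "\<alpha> \<le> 1"
    and "\<forall>i j. i \<noteq> j \<longrightarrow> \<rho> $ i $ j = 0"
    and "C2_fun (\<lambda>p. L (fst p) (snd p))"
    and "\<forall>z v. L z (- v) = L z v"
    and "smooth_curve_on {a..b} x"
  shows "(\<forall>t\<in>{a..b}. EL_b L \<rho> \<alpha> a b (\<lambda>s. x (a + b - s)) t = EL_a L \<rho> \<alpha> a b x (a + b - t))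
       \<and> ((\<forall>t\<in>{a..b}. EL_b L \<rho> \<alpha> a b (\<lambda>s. x (a + b - s)) t = 0)
            \<longleftrightarrow> (\<forall>t\<in>{a..b}. EL_a L \<rho> \<alpha> a b x t = 0))"
proof -
  note ab = assms(1)
  define S where "S = {a..b}"
  define y where "y = (\<lambda>s. x (a + b - s))"
  define P where "P s = partial_v L (x s) (ddt {a..b} x s)" for s
  have rS: "a + b - s \<in> {a..b}" if "s \<in> {a..b}" for s using that by auto
  have dy: "ddt {a..b} (\<lambda>s. x (a + b - s)) s = - ddt {a..b} x (a+b-s)" if "s \<in> {a..b}" for s
    by (rule ddt_reflect[OF ab that])
  have key: "EL_b L \<rho> \<alpha> a b y t = EL_a L \<rho> \<alpha> a b x (a + b - t)" if t: "t \<in> {a..b}" for t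
  proof -
    have "ddt {a..b} (\<lambda>s. partial_v L (y s) (ddt {a..b} y s)) t = ddt {a..b} (\<lambda>s. - P (a+b-s)) t"
      by (rule ddt_cong[OF t]) (simp add: dy y_def P_def partial_v_odd[OF assms(5,6)])
    also have "\<dots> = - ddt {a..b} (\<lambda>s. P (a+b-s)) t" by (rule ddt_minus[OF ab t])
    also have "\<dots> = ddt {a..b} P (a+b-t)" using ddt_reflect[OF ab t, of P] by simp
    finally have T1: "ddt {a..b} (\<lambda>s. partial_v L (y s) (ddt {a..b} y s)) t = ddt {a..b} P (a+b-t)" .
    have T2: "partial_z L (y t) (ddt {a..b} y t) = partial_z L (x (a+b-t)) (ddt {a..b} x (a+b-t))"
      using dy[OF t] partial_z_even[OF assms(6)] by (simp add: y_def)
    have A: "RLv_right a b \<alpha> y s = RLv_left a b \<alpha> x (a+b-s)" if "s \<in> {a..b}" for s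
    proof -
      have "RL_right a b \<alpha> (\<lambda>s. x (a + b - s) $ i) s = RL_left a b \<alpha> (\<lambda>s. x s $ i) (a + b - s)" for i
        using RL_reflect[OF ab that, where g="\<lambda>u. x u $ i"] by simp
      then show ?thesis unfolding RLv_right_def RLv_left_def y_def by (simp add: vec_eq_iff)
    qed
    have T3: "RLv_right a b \<alpha> (RLv_right a b \<alpha> y) t = RLv_left a b \<alpha> (RLv_left a b \<alpha> x) (a+b-t)"
    proof -
      have "RL_right a b \<alpha> (\<lambda>s. RLv_right a b \<alpha> y s $ i) t = RL_left a b \<alpha> (\<lambda>s. RLv_left a b \<alpha> x s $ i) (a+b-t)" for i
      proof -
        have "RL_right a b \<alpha> (\<lambda>s. RLv_right a b \<alpha> y s $ i) t = RL_right a b \<alpha> (\<lambda>s. RLv_left a b \<alpha> x (a+b-s) $ i) t"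
          by (rule RL_right_cong[OF t]) (simp add: A)
        also have "\<dots> = RL_left a b \<alpha> (\<lambda>s. RLv_left a b \<alpha> x s $ i) (a+b-t)"
          by (rule RL_reflect[OF ab t])
        finally show ?thesis .
      qed
      then show ?thesis unfolding RLv_right_def[of _ _ _ "RLv_right a b \<alpha> y"] RLv_left_def[of _ _ _ "RLv_left a b \<alpha> x"]
        by (simp add: vec_eq_iff)
    qed
    show ?thesis unfolding EL_a_def EL_b_def T1 T2 T3 P_def by simp
  qed
  have "(\<forall>t\<in>{a..b}. EL_b L \<rho> \<alpha> a b y t = 0) \<longleftrightarrow> (\<forall>t\<in>{a..b}. EL_a L \<rho> \<alpha> a b x t = 0)"
  proof
    assume h: "\<forall>t\<in>{a..b}. EL_b L \<rho> \<alpha> a b y t = 0"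
    show "\<forall>t\<in>{a..b}. EL_a L \<rho> \<alpha> a b x t = 0"
    proof
      fix t assume t: "t \<in> {a..b}"
      have "EL_a L \<rho> \<alpha> a b x t = EL_b L \<rho> \<alpha> a b y (a+b-t)" using key[OF rS[OF t]] by simp
      then show "EL_a L \<rho> \<alpha> a b x t = 0" using h rS[OF t] by simp
    qed
  next
    assume h: "\<forall>t\<in>{a..b}. EL_a L \<rho> \<alpha> a b x t = 0"
    then show "\<forall>t\<in>{a..b}. EL_b L \<rho> \<alpha> a b y t = 0" using key rS by simp
  qed
  then show ?thesis using key unfolding y_def by simp
qed

end
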